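(* Let $X$ be a Banach space, and let $A$ and $B$ be closed, densely defined linear operators on $X$ generating strongly continuous semigroups $(T(t))_{t\ge0}$ and $(S(t))_{t\ge0}$, respectively. Assume that the closure $\overline{A+B}$ of $A+B$ satisfies $D(A)\cap D(B)\subset D(\overline{A+B})$ and generates a strongly continuous semigroup $(U(t))_{t\ge0}$. Let $\Theta\in(0,1)$ and assume the stability condition: there exist constants $M_4\ge1$, $\omega_4\in\mathbb{R}$ such that for all $t\ge0$ and $n\in\mathbb{N}$ $$\|[\Theta S(t/n)T(t/n)+(1-\Theta)T(t/n)S(t/n)]^n\|\le M_4e^{\omega_4 t}\quad\text{and}\quad \|[\Theta T(t/n)S(t/n)+(1-\Theta)S(t/n)T(t/n)]^n\|\le M_4e^{\omega_4 t}.$$ Then the weighted splitting is convergent at every fixed time level $t>0$, i.e. $$\lim_{n\to\infty}\big\|[\Theta S(t/n)T(t/n)+(1-\Theta)T(t/n)S(t/n)]^n x-U(t)x\big\|=0\quad\text{for all }x\in X.$$ *)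

theory Defs
  imports "HOL-Analysis.Analysis"
begin

text \<open>Unbounded linear operators on a Banach space are represented by a pair
  (domain D, map A); only the values of A on D matter.\<close>

definition op_graph :: "'a set \<Rightarrow> ('a \<Rightarrow> 'b) \<Rightarrow> ('a \<times> 'b) set" where
  "op_graph D A = {(x, A x) | x. x \<in> D}"

definition linear_operator :: "'a::real_vector set \<Rightarrow> ('a \<Rightarrow> 'a) \<Rightarrow> bool" where
  "linear_operator D A \<longleftrightarrow> subspace D \<and>
     (\<forall>x\<in>D. \<forall>y\<in>D. \<forall>c::real. A (x + y) = A x + A y \<and> A (c *\<^sub>R x) = c *\<^sub>R A x)"

definition closed_operator :: "'a::real_normed_vector set \<Rightarrow> ('a \<Rightarrow> 'a) \<Rightarrow> bool" where
  "closed_operator D A \<longleftrightarrow> linear_operator D A \<and> closed (op_graph D A)"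

definition densely_defined :: "'a::real_normed_vector set \<Rightarrow> bool" where
  "densely_defined D \<longleftrightarrow> closure D = UNIV"

definition C0_semigroup :: "(real \<Rightarrow> ('a::real_normed_vector \<Rightarrow>\<^sub>L 'a)) \<Rightarrow> bool" where
  "C0_semigroup T \<longleftrightarrow> T 0 = id_blinfun \<and>
     (\<forall>s\<ge>0. \<forall>t\<ge>0. T (s + t) = T s o\<^sub>L T t) \<and>
     (\<forall>x. continuous_on {0..} (\<lambda>t. blinfun_apply (T t) x))"

definition generates :: "'a::real_normed_vector set \<Rightarrow> ('a \<Rightarrow> 'a) \<Rightarrow> (real \<Rightarrow> ('a \<Rightarrow>\<^sub>L 'a)) \<Rightarrow> bool" where
  "generates D A T \<longleftrightarrow> C0_semigroup T \<and>
     D = {x. \<exists>y. ((\<lambda>h. (1 / h) *\<^sub>R (T h x - x)) \<longlongrightarrow> y) (at_right 0)} \<and>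
     (\<forall>x\<in>D. ((\<lambda>h. (1 / h) *\<^sub>R (T h x - x)) \<longlongrightarrow> A x) (at_right 0))"

primrec bl_pow :: "('a::real_normed_vector \<Rightarrow>\<^sub>L 'a) \<Rightarrow> nat \<Rightarrow> ('a \<Rightarrow>\<^sub>L 'a)" where
  "bl_pow L 0 = id_blinfun"
| "bl_pow L (Suc n) = L o\<^sub>L bl_pow L n"

end

theory Submission
  imports Defs
begin


lemma blinfun_compose_assoc: "(a o\<^sub>L b) o\<^sub>L c = a o\<^sub>L (b o\<^sub>L c)"
  by (rule blinfun_eqI) simp

lemma bl_pow_Suc': "bl_pow L (Suc n) = bl_pow L n o\<^sub>L L"
proof (induction n)
  case 0 then show ?case by (auto intro!: blinfun_eqI)
next
  case (Suc n)
  have "bl_pow L (Suc (Suc n)) = L o\<^sub>L bl_pow L (Suc n)" by simp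
  also have "\<dots> = L o\<^sub>L (bl_pow L n o\<^sub>L L)" using Suc by simp
  also have "\<dots> = bl_pow L (Suc n) o\<^sub>L L" by (simp add: blinfun_compose_assoc)
  finally show ?case .
qed

lemma bl_pow_comm_app: "bl_pow L k (L x) = L (bl_pow L k x)"
proof -
  have "bl_pow L k (L x) = (bl_pow L k o\<^sub>L L) x" by simp
  also have "\<dots> = bl_pow L (Suc k) x" by (simp only: bl_pow_Suc')
  finally show ?thesis by simp
qed

lemma bl_pow_commute:
  assumes "Q o\<^sub>L L = L o\<^sub>L Q"
  shows "Q o\<^sub>L bl_pow L n = bl_pow L n o\<^sub>L Q"
proof (induction n)
  case 0 then show ?case by (simp add: blinfun_eqI)
next
  case (Suc n)
  have "Q o\<^sub>L bl_pow L (Suc n) = (Q o\<^sub>L L) o\<^sub>L bl_pow L n" by (simp add: blinfun_compose_assoc)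
  also have "\<dots> = L o\<^sub>L (Q o\<^sub>L bl_pow L n)" using assms by (simp add: blinfun_compose_assoc)
  also have "\<dots> = bl_pow L (Suc n) o\<^sub>L Q" using Suc by (simp add: blinfun_compose_assoc)
  finally show ?case .
qed

lemma norm_id_blinfun_le: "norm (id_blinfun :: 'a::real_normed_vector \<Rightarrow>\<^sub>L 'a) \<le> 1"
  by (rule norm_blinfun_bound) auto

lemma banach_steinhaus:
  fixes L :: "'i \<Rightarrow> ('a::banach \<Rightarrow>\<^sub>L 'b::real_normed_vector)"
  assumes pb: "\<And>x. \<exists>B. \<forall>i\<in>I. norm (L i x) \<le> B"
  shows "\<exists>K. \<forall>i\<in>I. norm (L i) \<le> K"
proof -
  define E where "E k = {x. \<forall>i\<in>I. norm (L i x) \<le> real k}" for k :: nat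
  have clE: "closed (E k)" for k
  proof -
    have "E k = (\<Inter>i\<in>I. {x. norm (L i x) \<le> real k})" unfolding E_def by auto
    moreover have "closed {x. norm (L i x) \<le> real k}" for i
      by (intro closed_Collect_le continuous_intros) 
    ultimately show ?thesis by auto
  qed
  have unE: "(\<Union>k. E k) = UNIV"
  proof -
    { fix x
      obtain B where "\<forall>i\<in>I. norm (L i x) \<le> B" using pb by blast
      moreover obtain k :: nat where "B \<le> real k" using real_arch_simple by blast
      ultimately have "x \<in> E k" unfolding E_def by force
      then have "x \<in> (\<Union>k. E k)" by blast }
    then show ?thesis by blast
  qed
  have "\<exists>k. interior (E k) \<noteq> {}"
  proof (rule ccontr)
    assume "\<nexists>k. interior (E k) \<noteq> {}"
    then have "euclidean interior_of \<Union>(range E) = {}"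
      by (intro Baire_category_alt) (auto simp: completely_metrizable_space_euclidean clE)
    then show False using unE by simp
  qed
  then obtain k x0 where "x0 \<in> interior (E k)" by blast
  then obtain r where r: "r > 0" "ball x0 r \<subseteq> E k" using open_contains_ball by (meson interior_subset open_interior subset_trans)
  have "norm (L i) \<le> 4 * real k / r" if i: "i \<in> I" for i
  proof (rule norm_blinfun_bound)
    show "0 \<le> 4 * real k / r" using r by simp
    fix y :: 'a
    show "norm (L i y) \<le> 4 * real k / r * norm y"
    proof (cases "y = 0")
      case True then show ?thesis by simp
    next
      case False
      define z where "z = (r / 2 / norm y) *\<^sub>R y"
      have nz: "norm z = r / 2" using False r by (simp add: z_def)
      have "x0 + z \<in> E k" "x0 \<in> E k" using r nz by (auto intro!: subsetD[OF r(2)] simp: dist_norm)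
      then have "norm (L i (x0 + z)) \<le> real k" "norm (L i x0) \<le> real k" using i unfolding E_def by auto
      then have "norm (L i z) \<le> 2 * real k"
        using norm_triangle_ineq4[of "L i (x0 + z)" "L i x0"] by (simp add: blinfun.add_right)
      moreover have "L i y = (2 * norm y / r) *\<^sub>R L i z" using False r by (simp add: z_def blinfun.scaleR_right)
      moreover have "0 \<le> 2 * norm y / r" using r by simp
      ultimately have "norm (L i y) \<le> (2 * norm y / r) * (2 * real k)"
        by (metis mult_left_mono norm_scaleR abs_of_nonneg)
      then show ?thesis by (simp add: field_simps)
    qed
  qed
  then show ?thesis by blast
qed




lemma avg_tendsto:
  fixes f :: "real \<Rightarrow> 'a::banach"
  assumes cont: "continuous_on {a..b} f" and ab: "a < b"
  shows "((\<lambda>h. (1/h) *\<^sub>R integral {a..a+h} f) \<longlongrightarrow> f a) (at_right 0)"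
proof (rule tendstoI)
  fix e :: real assume e: "e > 0"
  obtain d where d: "d > 0" "\<forall>x'\<in>{a..b}. dist x' a < d \<longrightarrow> dist (f x') (f a) < e/2"
    using cont ab e unfolding continuous_on_iff by (metis atLeastAtMost_iff half_gt_zero less_eq_real_def order_refl)
  have "\<forall>h>0. h < min d (b-a) \<longrightarrow> dist ((1/h) *\<^sub>R integral {a..a+h} f) (f a) < e"
  proof (intro allI impI)
    fix h :: real assume h: "h > 0" "h < min d (b-a)"
    have ci: "continuous_on {a..a+h} f" using cont h by (auto intro: continuous_on_subset)
    have "integral {a..a+h} (\<lambda>s. f s - f a) = integral {a..a+h} f - h *\<^sub>R f a"
      using h by (subst integral_diff) (auto intro!: integrable_continuous_real ci)
    moreover have "norm (integral {a..a+h} (\<lambda>s. f s - f a)) \<le> e/2 * (a + h - a)"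
    proof (rule integral_bound)
      show "a \<le> a + h" using h by simp
      show "continuous_on {a..a+h} (\<lambda>s. f s - f a)" by (intro continuous_intros ci)
      fix s assume "s \<in> {a..a+h}"
      then have "s \<in> {a..b}" "dist s a < d" using h by (auto simp: dist_real_def)
      then show "norm (f s - f a) \<le> e/2" using d by (auto simp: dist_norm intro: less_imp_le)
    qed
    ultimately have "norm (integral {a..a+h} f - h *\<^sub>R f a) \<le> e/2 * h" by simp
    moreover have "(1/h) *\<^sub>R integral {a..a+h} f - f a = (1/h) *\<^sub>R (integral {a..a+h} f - h *\<^sub>R f a)"
      using h by (simp add: algebra_simps)
    ultimately have "dist ((1/h) *\<^sub>R integral {a..a+h} f) (f a) \<le> e/2"
      using h by (simp add: dist_norm divide_le_eq mult.commute)
    then show "dist ((1/h) *\<^sub>R integral {a..a+h} f) (f a) < e" using e by simp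
  qed
  then show "\<forall>\<^sub>F h in at_right 0. dist ((1/h) *\<^sub>R integral {a..a+h} f) (f a) < e"
    unfolding eventually_at_right_field using d ab by (intro exI[of _ "min d (b-a)"]) auto
qed

locale gen =
  fixes D :: "'a::banach set" and G :: "'a \<Rightarrow> 'a" and U :: "real \<Rightarrow> ('a \<Rightarrow>\<^sub>L 'a)"
  assumes gen: "generates D G U"
begin

lemma U0: "U 0 = id_blinfun" using gen unfolding generates_def C0_semigroup_def by auto
lemma Uadd: "s \<ge> 0 \<Longrightarrow> t \<ge> 0 \<Longrightarrow> U (s + t) = U s o\<^sub>L U t"
  using gen unfolding generates_def C0_semigroup_def by auto
lemma Ucont: "continuous_on {0..} (\<lambda>s. U s x)"
  using gen unfolding generates_def C0_semigroup_def by auto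
lemma Dchar: "D = {x. \<exists>y. ((\<lambda>h. (1 / h) *\<^sub>R (U h x - x)) \<longlongrightarrow> y) (at_right 0)}"
  using gen unfolding generates_def by auto
lemma Glim: "x \<in> D \<Longrightarrow> ((\<lambda>h. (1 / h) *\<^sub>R (U h x - x)) \<longlongrightarrow> G x) (at_right 0)"
  using gen unfolding generates_def by auto

lemma Uadd_app: "s \<ge> 0 \<Longrightarrow> t \<ge> 0 \<Longrightarrow> U (s + t) x = U s (U t x)"
  using Uadd by simp

lemma Ucomm: "s \<ge> 0 \<Longrightarrow> t \<ge> 0 \<Longrightarrow> U s (U t x) = U t (U s x)"
  by (metis Uadd_app add.commute)

lemma Ucont_on: "0 \<le> a \<Longrightarrow> continuous_on {a..b} (\<lambda>s. U s x)"
  by (rule continuous_on_subset[OF Ucont]) auto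

lemma Ustrong0: "((\<lambda>h. U h y) \<longlongrightarrow> y) (at_right 0)"
proof -
  have "((\<lambda>h. U h y) \<longlongrightarrow> U 0 y) (at 0 within {0..})"
    using Ucont[of y] unfolding continuous_on_def by auto
  then have "((\<lambda>h. U h y) \<longlongrightarrow> U 0 y) (at_right 0)"
    by (rule tendsto_within_subset) auto
  then show ?thesis by (simp add: U0)
qed

lemma Dinv: assumes x: "x \<in> D" and s: "s \<ge> 0"
  shows "U s x \<in> D" "G (U s x) = U s (G x)"
proof -
  have ev: "\<forall>\<^sub>F h in at_right 0. (1 / h) *\<^sub>R (U s ((U h x) - x)) = (1 / h) *\<^sub>R (U h (U s x) - U s x)"
    unfolding eventually_at_right_field
    using s by (intro exI[of _ 1]) (auto simp: Ucomm blinfun.diff_right)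
  have "((\<lambda>h. U s ((1 / h) *\<^sub>R (U h x - x))) \<longlongrightarrow> U s (G x)) (at_right 0)"
    by (intro blinfun.tendsto[OF tendsto_const] Glim x)
  then have lim: "((\<lambda>h. (1 / h) *\<^sub>R (U h (U s x) - U s x)) \<longlongrightarrow> U s (G x)) (at_right 0)"
    by (rule Lim_transform_eventually) (use ev in \<open>simp add: blinfun.scaleR_right\<close>)
  then show "U s x \<in> D" by (subst Dchar) blast
  then show "G (U s x) = U s (G x)"
    using Glim lim tendsto_unique trivial_limit_at_right_real by blast
qed

lemma Ubound: assumes "b \<ge> 0" shows "\<exists>K. \<forall>s\<in>{0..b}. norm (U s) \<le> K"
proof (rule banach_steinhaus)
  fix x
  have "compact ((\<lambda>s. U s x) ` {0..b})"
    by (intro compact_continuous_image Ucont_on) auto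
  then obtain B where "\<forall>y\<in>(\<lambda>s. U s x) ` {0..b}. norm y \<le> B"
    using compact_imp_bounded bounded_iff by metis
  then show "\<exists>B. \<forall>s\<in>{0..b}. norm (U s x) \<le> B" by auto
qed

lemma Ddense: "closure D = UNIV"
proof -
  { fix x
    define f where "f s = U s x" for s
    define v where "v \<tau> = (1/\<tau>) *\<^sub>R integral {0..\<tau>} f" for \<tau>
    have fc: "continuous_on {a..b} f" if "0 \<le> a" for a b using Ucont_on that unfolding f_def by blast
    have vD: "v \<tau> \<in> D" if \<tau>: "\<tau> > 0" for \<tau>
    proof -
      have ev: "\<forall>\<^sub>F h in at_right 0.
         (1/\<tau>) *\<^sub>R ((1/h) *\<^sub>R integral {\<tau>..\<tau>+h} f - (1/h) *\<^sub>R integral {0..0+h} f) =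
         (1 / h) *\<^sub>R (U h (v \<tau>) - v \<tau>)"
        unfolding eventually_at_right_field
      proof (intro exI[of _ \<tau>] conjI allI impI)
        show "\<tau> > 0" by fact
        fix h :: real assume h: "0 < h" "h < \<tau>"
        have "U h (integral {0..\<tau>} f) = integral {0..\<tau>} (\<lambda>s. U h (f s))"
          by (rule integral_blinfun_apply[symmetric]) (intro integrable_continuous_real fc, simp)
        also have "\<dots> = integral {0..\<tau>} (\<lambda>s. f (s + h))"
          unfolding f_def using h by (intro integral_cong) (simp add: Uadd_app[symmetric] add.commute)
        also have "\<dots> = integral {h..\<tau>+h} f"
          using integral_shift_real_ivl[where f=f and a=h and b="\<tau>+h" and c=h] by simp
        finally have 1: "U h (integral {0..\<tau>} f) = integral {h..\<tau>+h} f" .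
        have 2: "integral {0..h} f + integral {h..\<tau>} f = integral {0..\<tau>} f"
          using h by (intro Henstock_Kurzweil_Integration.integral_combine integrable_continuous_real fc; simp)
        have 3: "integral {h..\<tau>} f + integral {\<tau>..\<tau>+h} f = integral {h..\<tau>+h} f"
          using h by (intro Henstock_Kurzweil_Integration.integral_combine integrable_continuous_real fc; simp)
        have "U h (v \<tau>) - v \<tau> = (1/\<tau>) *\<^sub>R (integral {\<tau>..\<tau>+h} f - integral {0..h} f)"
        proof -
          have "U h (integral {0..\<tau>} f) - integral {0..\<tau>} f = integral {h..\<tau>+h} f - integral {0..\<tau>} f"
            using 1 by simp
          also have "\<dots> = integral {\<tau>..\<tau>+h} f - integral {0..h} f"
            by (simp only: 2[symmetric] 3[symmetric]) (simp add: algebra_simps)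
          finally have E: "U h (integral {0..\<tau>} f) - integral {0..\<tau>} f = integral {\<tau>..\<tau>+h} f - integral {0..h} f" .
          show ?thesis unfolding v_def blinfun.scaleR_right scaleR_diff_right[symmetric] E ..
        qed
        then show "(1/\<tau>) *\<^sub>R ((1/h) *\<^sub>R integral {\<tau>..\<tau>+h} f - (1/h) *\<^sub>R integral {0..0+h} f) =
         (1 / h) *\<^sub>R (U h (v \<tau>) - v \<tau>)" by (simp add: scaleR_diff_right mult.commute)
      qed
      have "((\<lambda>h. (1/\<tau>) *\<^sub>R ((1/h) *\<^sub>R integral {\<tau>..\<tau>+h} f - (1/h) *\<^sub>R integral {0..0+h} f))
             \<longlongrightarrow> (1/\<tau>) *\<^sub>R (f \<tau> - f 0)) (at_right 0)"
        using \<tau> by (intro tendsto_intros avg_tendsto[where f=f and a=\<tau> and b="\<tau>+1"] avg_tendsto[where f=f and a=0 and b=1] fc) auto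
      then have "((\<lambda>h. (1 / h) *\<^sub>R (U h (v \<tau>) - v \<tau>)) \<longlongrightarrow> (1/\<tau>) *\<^sub>R (f \<tau> - f 0)) (at_right 0)"
        by (rule Lim_transform_eventually) (rule ev)
      then show ?thesis by (subst Dchar) blast
    qed
    have "(v \<longlongrightarrow> f 0) (at_right 0)"
      unfolding v_def using avg_tendsto[where f=f and a=0 and b=1] fc by simp
    then have "(v \<longlongrightarrow> x) (at_right 0)" by (simp add: f_def U0)
    moreover have "\<forall>\<^sub>F \<tau> in at_right 0. v \<tau> \<in> closure D"
      unfolding eventually_at_right_field using vD closure_subset
      by (intro exI[of _ 1]) auto
    ultimately have "x \<in> closure D"
      using Lim_in_closed_set[OF closed_closure _ trivial_limit_at_right_real] by blast }
  then show ?thesis by auto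
qed

end




lemma unif_compact:
  fixes \<Psi> :: "nat \<Rightarrow> real \<Rightarrow> 'b::real_normed_vector" and gA gB :: "real \<Rightarrow> 'a::real_normed_vector"
  assumes K: "compact K" and c1: "continuous_on K gA" and c2: "continuous_on K gB" and L: "L \<ge> 0"
    and lip: "\<And>n s s'. n \<ge> 1 \<Longrightarrow> s \<in> K \<Longrightarrow> s' \<in> K \<Longrightarrow>
        norm (\<Psi> n s - \<Psi> n s') \<le> L * (norm (gA s - gA s') + norm (gB s - gB s'))"
    and pt: "\<And>s. s \<in> K \<Longrightarrow> (\<lambda>n. \<Psi> n s) \<longlonglongrightarrow> 0"
    and e: "e > 0"
  shows "\<forall>\<^sub>F n in sequentially. \<forall>s\<in>K. norm (\<Psi> n s) < e"
proof -
  define e' where "e' = e / (4 * (L + 1))"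
  have e': "e' > 0" using e L by (simp add: e'_def)
  have "\<forall>s\<in>K. \<exists>d>0. \<forall>s'\<in>K. dist s' s < d \<longrightarrow> dist (gA s') (gA s) < e' \<and> dist (gB s') (gB s) < e'"
  proof
    fix s assume s: "s \<in> K"
    obtain d1 where d1: "d1 > 0" "\<forall>s'\<in>K. dist s' s < d1 \<longrightarrow> dist (gA s') (gA s) < e'"
      using c1 s e' unfolding continuous_on_iff by blast
    obtain d2 where d2: "d2 > 0" "\<forall>s'\<in>K. dist s' s < d2 \<longrightarrow> dist (gB s') (gB s) < e'"
      using c2 s e' unfolding continuous_on_iff by blast
    show "\<exists>d>0. \<forall>s'\<in>K. dist s' s < d \<longrightarrow> dist (gA s') (gA s) < e' \<and> dist (gB s') (gB s) < e'"
      using d1 d2 by (intro exI[of _ "min d1 d2"]) auto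
  qed
  then obtain d where d: "\<And>s. s \<in> K \<Longrightarrow> d s > 0"
    "\<And>s s'. s \<in> K \<Longrightarrow> s' \<in> K \<Longrightarrow> dist s' s < d s \<Longrightarrow> dist (gA s') (gA s) < e' \<and> dist (gB s') (gB s) < e'"
    by metis
  have "K \<subseteq> (\<Union>s\<in>K. ball s (d s))" using d(1) by auto
  then obtain K' where K': "K' \<subseteq> K" "finite K'" "K \<subseteq> (\<Union>s\<in>K'. ball s (d s))"
    using compactE_image[OF K, of K "\<lambda>s. ball s (d s)"] by auto
  have "\<forall>\<^sub>F n in sequentially. \<forall>s\<in>K'. norm (\<Psi> n s) < e/2"
  proof (intro eventually_ball_finite ballI)
    show "finite K'" by fact
    fix s assume "s \<in> K'"
    then have "(\<lambda>n. \<Psi> n s) \<longlonglongrightarrow> 0" using pt K' by auto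
    from tendstoD[OF this, of "e/2"] show "\<forall>\<^sub>F n in sequentially. norm (\<Psi> n s) < e/2"
      using e by (simp add: dist_norm)
  qed
  moreover have "\<forall>\<^sub>F n in sequentially. n \<ge> 1" by (rule eventually_ge_at_top)
  ultimately show ?thesis
  proof eventually_elim
    case (elim n)
    show ?case
    proof
      fix s assume s: "s \<in> K"
      then obtain s0 where s0: "s0 \<in> K'" "s \<in> ball s0 (d s0)" using K' by auto
      then have "dist s s0 < d s0" by (simp add: dist_commute)
      then have "dist (gA s) (gA s0) < e'" "dist (gB s) (gB s0) < e'"
        using d(2)[of s0 s] s s0 K' by auto
      then have "norm (\<Psi> n s - \<Psi> n s0) \<le> L * (2 * e')"
        using lip[of n s s0] elim s s0 K' L
        by (smt (verit, best) dist_norm mult_left_mono subsetD)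
      also have "\<dots> < e/2" using e L by (simp add: e'_def field_simps)
      finally have "norm (\<Psi> n s - \<Psi> n s0) < e/2" .
      moreover have "norm (\<Psi> n s0) < e/2" using elim s0 by auto
      ultimately show "norm (\<Psi> n s) < e"
        using norm_triangle_ineq4[of "\<Psi> n s" "\<Psi> n s0"] norm_triangle_ineq[of "\<Psi> n s - \<Psi> n s0" "\<Psi> n s0"]
        by simp
    qed
  qed
qed

lemma ext_dense:
  fixes L :: "nat \<Rightarrow> ('a::real_normed_vector \<Rightarrow>\<^sub>L 'b::real_normed_vector)"
  assumes bnd: "\<And>n. n \<ge> 1 \<Longrightarrow> norm (L n) \<le> K"
    and cv: "\<And>z. z \<in> D \<Longrightarrow> (\<lambda>n. L n z) \<longlonglongrightarrow> 0"
    and dense: "closure D = UNIV"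
  shows "(\<lambda>n. L n x) \<longlonglongrightarrow> 0"
proof (rule tendstoI)
  fix e :: real assume e: "e > 0"
  have K0: "K \<ge> 0" using bnd[of 1] norm_ge_zero order_trans by blast
  have "x \<in> closure D" using dense by simp
  moreover have "e / (2 * (K + 1)) > 0" using e K0 by simp
  ultimately obtain z where z: "z \<in> D" "dist z x < e / (2 * (K + 1))"
    unfolding closure_approachable by blast
  have "\<forall>\<^sub>F n in sequentially. norm (L n z) < e/2"
    using tendstoD[OF cv[OF z(1)], of "e/2"] e by (simp add: dist_norm)
  moreover have "\<forall>\<^sub>F n in sequentially. n \<ge> 1" by (rule eventually_ge_at_top)
  ultimately show "\<forall>\<^sub>F n in sequentially. dist (L n x) 0 < e"
  proof eventually_elim
    case (elim n)
    have "norm (L n x - L n z) = norm (L n (x - z))" by (simp add: blinfun.diff_right)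
    also have "\<dots> \<le> K * norm (x - z)"
      using bnd[OF elim(2)] norm_blinfun[of "L n" "x - z"] by (meson mult_right_mono norm_ge_zero order_trans)
    also have "\<dots> \<le> K * (e / (2 * (K + 1)))"
      using z(2) K0 by (intro mult_left_mono) (auto simp: dist_norm norm_minus_commute)
    also have "\<dots> \<le> e/2" using K0 e by (simp add: field_simps)
    finally show ?case using elim(1) norm_triangle_ineq[of "L n x - L n z" "L n z"] by simp
  qed
qed

lemma exp_quot_tendsto:
  fixes h :: "nat \<Rightarrow> real"
  assumes "h \<longlonglongrightarrow> 0" "\<And>n. n \<ge> 1 \<Longrightarrow> h n \<noteq> 0"
  shows "(\<lambda>n. (exp (\<mu> * h n) - 1) / h n) \<longlonglongrightarrow> \<mu>"
proof -
  have "((\<lambda>x. exp (\<mu> * x)) has_field_derivative exp (\<mu> * 0) * \<mu>) (at 0)"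
    by (auto intro!: derivative_eq_intros)
  then have "((\<lambda>y. (exp (\<mu> * y) - exp (\<mu> * 0)) / (y - 0)) \<longlongrightarrow> \<mu>) (at 0)"
    unfolding has_field_derivative_iff by simp
  then have d: "((\<lambda>y. (exp (\<mu> * y) - 1) / y) \<longlongrightarrow> \<mu>) (at 0)" by simp
  have "filterlim h (at 0) sequentially"
    using assms by (intro filterlim_atI) (auto simp: eventually_sequentially)
  from filterlim_compose[OF d this] show ?thesis by (simp add: o_def)
qed




locale chern = gen DC C U for DC :: "'a::banach set" and C U +
  fixes F :: "real \<Rightarrow> ('a \<Rightarrow>\<^sub>L 'a)" and M W t :: real and Dc :: "'a set"
  assumes stab: "\<And>h k. h \<ge> 0 \<Longrightarrow> norm (bl_pow (F h) k) \<le> M * exp (W * real k * h)"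
    and M1: "M \<ge> 1" and W0: "W \<ge> 0" and tpos: "t > 0"
    and core: "\<And>z. z \<in> DC \<Longrightarrow> \<exists>zs. (\<forall>j. zs j \<in> Dc) \<and> zs \<longlonglongrightarrow> z \<and> (\<lambda>j. C (zs j)) \<longlonglongrightarrow> C z"
    and deriv: "\<And>z. z \<in> Dc \<Longrightarrow> (\<lambda>n. (1 / (t / real n)) *\<^sub>R (F (t / real n) z - z)) \<longlonglongrightarrow> C z"
begin

definition "mu = W + 1"
definition "hh n = t / real n"
definition "P n = F (hh n)"
definition "aa n k = exp (- mu * real (Suc k) * hh n)"
definition "R n = hh n *\<^sub>R (\<Sum>k. aa n k *\<^sub>R bl_pow (P n) k)"

lemma hpos: "n \<ge> 1 \<Longrightarrow> hh n > 0" using tpos by (simp add: hh_def)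
lemma hnn: "hh n \<ge> 0" using tpos by (simp add: hh_def)
lemma mupos: "mu > 0" using W0 by (simp add: mu_def)

lemma Pb: "norm (bl_pow (P n) k) \<le> M * exp (W * real k * hh n)"
  unfolding P_def using stab hnn by blast

lemma Pbt: assumes "n \<ge> 1" "j \<le> n" shows "norm (bl_pow (P n) j) \<le> M * exp (W * t)"
proof -
  have "real j * hh n \<le> real n * hh n" using assms hnn by (intro mult_right_mono) auto
  also have "\<dots> = t" using assms by (simp add: hh_def)
  finally have "W * real j * hh n \<le> W * t" using W0 by (simp add: mult.assoc mult_left_mono)
  then show ?thesis using Pb[of n j] M1 by (smt (verit) exp_le_cancel_iff mult_left_mono)
qed

lemma term_bound: "norm (aa n k *\<^sub>R bl_pow (P n) k) \<le> M * exp (- hh n) ^ Suc k"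
proof -
  have "norm (aa n k *\<^sub>R bl_pow (P n) k) = aa n k * norm (bl_pow (P n) k)"
    by (simp add: aa_def)
  also have "\<dots> \<le> aa n k * (M * exp (W * real k * hh n))"
    by (intro mult_left_mono Pb) (simp add: aa_def)
  also have "\<dots> = M * exp (- mu * real (Suc k) * hh n + W * real k * hh n)"
    by (simp only: aa_def exp_add mult_ac)
  also have "\<dots> \<le> M * exp (real (Suc k) * (- hh n))"
    using M1 W0 hnn by (intro mult_left_mono) (auto simp: mu_def algebra_simps)
  also have "\<dots> = M * exp (- hh n) ^ Suc k" by (simp only: exp_of_nat_mult)
  finally show ?thesis .
qed

lemma term_bound0: "norm (exp (- mu * real k * hh n) *\<^sub>R bl_pow (P n) k) \<le> M * exp (- hh n) ^ k"
proof -
  have "norm (exp (- mu * real k * hh n) *\<^sub>R bl_pow (P n) k) = exp (- mu * real k * hh n) * norm (bl_pow (P n) k)"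
    by simp
  also have "\<dots> \<le> exp (- mu * real k * hh n) * (M * exp (W * real k * hh n))"
    by (intro mult_left_mono Pb) simp
  also have "\<dots> = M * exp (- mu * real k * hh n + W * real k * hh n)"
    by (simp only: exp_add mult_ac)
  also have "\<dots> \<le> M * exp (real k * (- hh n))"
    using M1 W0 hnn by (intro mult_left_mono) (auto simp: mu_def algebra_simps)
  also have "\<dots> = M * exp (- hh n) ^ k" by (simp only: exp_of_nat_mult)
  finally show ?thesis .
qed

lemma q_lt1: "n \<ge> 1 \<Longrightarrow> norm (exp (- hh n)) < 1" using hpos by simp

lemma geo_summable: "n \<ge> 1 \<Longrightarrow> summable (\<lambda>k. M * exp (- hh n) ^ Suc k)"
  using q_lt1 by (simp add: summable_geometric summable_mult)

lemma norms_summable: "n \<ge> 1 \<Longrightarrow> summable (\<lambda>k. norm (aa n k *\<^sub>R bl_pow (P n) k))"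
proof (rule summable_comparison_test'[OF geo_summable], assumption)
  fix k
  have "norm (norm (aa n k *\<^sub>R bl_pow (P n) k)) = norm (aa n k *\<^sub>R bl_pow (P n) k)" by simp
  then show "norm (norm (aa n k *\<^sub>R bl_pow (P n) k)) \<le> M * exp (- hh n) ^ Suc k"
    using term_bound by metis
qed

lemma ser_summable: "n \<ge> 1 \<Longrightarrow> summable (\<lambda>k. aa n k *\<^sub>R bl_pow (P n) k)"
  by (rule summable_norm_cancel[OF norms_summable])

lemma Rnorm: assumes n: "n \<ge> 1" shows "norm (R n) \<le> M"
proof -
  let ?q = "exp (- hh n)"
  have q: "?q < 1" "?q > 0" using q_lt1[OF n] by auto
  have "norm (\<Sum>k. aa n k *\<^sub>R bl_pow (P n) k) \<le> (\<Sum>k. norm (aa n k *\<^sub>R bl_pow (P n) k))"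
    using summable_norm[OF norms_summable[OF n]] .
  also have "\<dots> \<le> (\<Sum>k. M * ?q ^ Suc k)"
    by (intro suminf_le norms_summable geo_summable n term_bound)
  also have "\<dots> = M * ?q / (1 - ?q)"
    using q by (simp add: suminf_mult suminf_geometric summable_geometric)
  finally have 1: "norm (\<Sum>k. aa n k *\<^sub>R bl_pow (P n) k) \<le> M * ?q / (1 - ?q)" .
  have "1 + hh n \<le> exp (hh n)" by simp
  then have "?q * (1 + hh n) \<le> ?q * exp (hh n)" by (intro mult_left_mono) auto
  also have "\<dots> = 1" by (simp flip: exp_add)
  finally have "?q * (1 + hh n) \<le> 1" .
  then have 2: "hh n * ?q \<le> 1 - ?q" by (simp add: algebra_simps)
  have "norm (R n) = hh n * norm (\<Sum>k. aa n k *\<^sub>R bl_pow (P n) k)"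
    using hnn by (simp add: R_def)
  also have "\<dots> \<le> hh n * (M * ?q / (1 - ?q))" using 1 hnn by (rule mult_left_mono)
  also have "\<dots> = M * (hh n * ?q / (1 - ?q))" by simp
  also have "\<dots> \<le> M * 1" using 2 q M1 by (intro mult_left_mono) (auto simp: divide_le_eq)
  finally show ?thesis by simp
qed

lemma Rapply: assumes "n \<ge> 1"
  shows "R n x = hh n *\<^sub>R (\<Sum>k. aa n k *\<^sub>R bl_pow (P n) k x)"
proof -
  have "(\<Sum>k. aa n k *\<^sub>R bl_pow (P n) k) x = (\<Sum>k. (aa n k *\<^sub>R bl_pow (P n) k) x)"
    by (rule bounded_linear.suminf[OF blinfun.bounded_linear_left ser_summable[OF assms]])
  then show ?thesis by (simp add: R_def blinfun.scaleR_left)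
qed

lemma vec_summable: "n \<ge> 1 \<Longrightarrow> summable (\<lambda>k. aa n k *\<^sub>R bl_pow (P n) k x)"
  using bounded_linear.summable[OF blinfun.bounded_linear_left ser_summable, of n x]
  by (simp add: blinfun.scaleR_left)

lemma Rinv: assumes n: "n \<ge> 1"
  shows "R n (exp (mu * hh n) *\<^sub>R z - P n z) = hh n *\<^sub>R z"
proof -
  define g where "g k = exp (- mu * real k * hh n) *\<^sub>R bl_pow (P n) k z" for k
  have eq: "aa n k *\<^sub>R bl_pow (P n) k (exp (mu * hh n) *\<^sub>R z - P n z) = g k - g (Suc k)" for k
  proof -
    have "bl_pow (P n) k (P n z) = P n (bl_pow (P n) k z)" by (rule bl_pow_comm_app)
    moreover have "aa n k * exp (mu * hh n) = exp (- mu * real k * hh n)"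
      by (simp add: aa_def flip: exp_add) (simp add: algebra_simps)
    moreover have "aa n k = exp (- mu * real (Suc k) * hh n)" by (simp add: aa_def)
    ultimately show ?thesis
      by (simp add: g_def blinfun.diff_right blinfun.scaleR_right scaleR_diff_right)
  qed
  have "g \<longlonglongrightarrow> 0"
  proof (rule Lim_null_comparison)
    show "\<forall>\<^sub>F k in sequentially. norm (g k) \<le> M * norm z * exp (- hh n) ^ k"
    proof (intro always_eventually allI)
      fix k
      have "norm (g k) = norm ((exp (- mu * real k * hh n) *\<^sub>R bl_pow (P n) k) z)"
        by (simp add: g_def blinfun.scaleR_left)
      also have "\<dots> \<le> norm (exp (- mu * real k * hh n) *\<^sub>R bl_pow (P n) k) * norm z" by (rule norm_blinfun)
      also have "\<dots> \<le> M * exp (- hh n) ^ k * norm z" by (intro mult_right_mono term_bound0) simp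
      finally show "norm (g k) \<le> M * norm z * exp (- hh n) ^ k" by (simp add: algebra_simps)
    qed
    show "(\<lambda>k. M * norm z * exp (- hh n) ^ k) \<longlonglongrightarrow> 0"
      using q_lt1[OF n] by (intro tendsto_mult_right_zero LIMSEQ_power_zero) simp
  qed
  then have "(\<lambda>k. g k - g (Suc k)) sums (g 0 - 0)" by (rule telescope_sums')
  then have "(\<lambda>k. aa n k *\<^sub>R bl_pow (P n) k (exp (mu * hh n) *\<^sub>R z - P n z)) sums z"
    by (simp add: eq g_def)
  then have "(\<Sum>k. aa n k *\<^sub>R bl_pow (P n) k (exp (mu * hh n) *\<^sub>R z - P n z)) = z"
    by (rule sums_unique[symmetric])
  then show ?thesis by (simp add: Rapply[OF n])
qed

lemma Rcomm_app: assumes n: "n \<ge> 1" shows "P n (R n x) = R n (P n x)"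
proof -
  have s: "P n (\<Sum>k. aa n k *\<^sub>R bl_pow (P n) k x) = (\<Sum>k. P n (aa n k *\<^sub>R bl_pow (P n) k x))"
    by (rule bounded_linear.suminf[OF blinfun.bounded_linear_right vec_summable[OF n]])
  have "P n (R n x) = hh n *\<^sub>R (\<Sum>k. P n (aa n k *\<^sub>R bl_pow (P n) k x))"
    using Rapply[OF n] s by (simp add: blinfun.scaleR_right)
  also have "\<dots> = R n (P n x)"
  proof -
    have "P n (aa n k *\<^sub>R bl_pow (P n) k x) = aa n k *\<^sub>R bl_pow (P n) k (P n x)" for k
      by (simp add: blinfun.scaleR_right bl_pow_comm_app)
    then show ?thesis using Rapply[OF n] by simp
  qed
  finally show ?thesis .
qed

lemma Rcomm: "n \<ge> 1 \<Longrightarrow> R n o\<^sub>L P n = P n o\<^sub>L R n"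
  by (rule blinfun_eqI) (simp add: Rcomm_app)

lemma Rcomm_pow: "n \<ge> 1 \<Longrightarrow> bl_pow (P n) m (R n x) = R n (bl_pow (P n) m x)"
  using bl_pow_commute[OF Rcomm, of n m] by (metis blinfun_apply_blinfun_compose)

end



context chern begin

definition "Phi n z = R n (mu *\<^sub>R z - C z) - z"
definition "eps n y = ((exp (mu * hh n) - 1) / hh n) *\<^sub>R y - mu *\<^sub>R y - ((1 / hh n) *\<^sub>R (U (hh n) y - y) - C y)"

lemma hh_tendsto: "hh \<longlonglongrightarrow> 0"
  unfolding hh_def by (rule lim_const_over_n)

lemma hh_at_right: "filterlim hh (at_right 0) sequentially"
  by (rule filterlim_at_withinI[OF hh_tendsto])
     (auto simp: eventually_sequentially intro!: exI[of _ 1] hpos)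

lemma equot: "(\<lambda>n. (exp (mu * hh n) - 1) / hh n) \<longlonglongrightarrow> mu"
  by (rule exp_quot_tendsto[OF hh_tendsto]) (use hpos in force)

lemma Phi_lip: assumes n: "n \<ge> 1"
  shows "norm (Phi n a - Phi n b) \<le> M * (mu * norm (a - b) + norm (C a - C b)) + norm (a - b)"
proof -
  have "Phi n a - Phi n b = R n (mu *\<^sub>R (a - b) - (C a - C b)) - (a - b)"
    by (simp add: Phi_def blinfun.bilinear_simps algebra_simps)
  also have "norm \<dots> \<le> norm (R n (mu *\<^sub>R (a - b) - (C a - C b))) + norm (a - b)"
    by (rule norm_triangle_ineq4)
  also have "norm (R n (mu *\<^sub>R (a - b) - (C a - C b))) \<le> M * (mu * norm (a - b) + norm (C a - C b))"
  proof -
    have "norm (R n (mu *\<^sub>R (a - b) - (C a - C b))) \<le> norm (R n) * norm (mu *\<^sub>R (a - b) - (C a - C b))"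
      by (rule norm_blinfun)
    also have "\<dots> \<le> M * (mu * norm (a - b) + norm (C a - C b))"
    proof (rule mult_mono)
      show "norm (R n) \<le> M" by (rule Rnorm[OF n])
      show "norm (mu *\<^sub>R (a - b) - (C a - C b)) \<le> mu * norm (a - b) + norm (C a - C b)"
        using norm_triangle_ineq4[of "mu *\<^sub>R (a - b)" "C a - C b"] mupos by simp
    qed (use M1 in auto)
    finally show ?thesis .
  qed
  finally show ?thesis by simp
qed

lemma Phi_core: assumes z: "z \<in> Dc" shows "(\<lambda>n. Phi n z) \<longlonglongrightarrow> 0"
proof (rule Lim_null_comparison)
  let ?g = "\<lambda>n. M * (\<bar>mu - (exp (mu * hh n) - 1) / hh n\<bar> * norm z + norm ((1 / hh n) *\<^sub>R (P n z - z) - C z))"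
  show "\<forall>\<^sub>F n in sequentially. norm (Phi n z) \<le> ?g n"
    unfolding eventually_sequentially
  proof (intro exI[of _ 1] allI impI)
    fix n :: nat assume n: "n \<ge> 1"
    have h0: "hh n \<noteq> 0" using hpos[OF n] by simp
    have zR: "z = R n ((1 / hh n) *\<^sub>R (exp (mu * hh n) *\<^sub>R z - P n z))"
      using Rinv[OF n, of z] h0 by (simp add: blinfun.scaleR_right)
    have "Phi n z = R n (mu *\<^sub>R z - C z - (1 / hh n) *\<^sub>R (exp (mu * hh n) *\<^sub>R z - P n z))"
      unfolding Phi_def by (subst (2) zR) (simp add: blinfun.diff_right)
    also have "mu *\<^sub>R z - C z - (1 / hh n) *\<^sub>R (exp (mu * hh n) *\<^sub>R z - P n z)
       = (mu - (exp (mu * hh n) - 1) / hh n) *\<^sub>R z + ((1 / hh n) *\<^sub>R (P n z - z) - C z)"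
      using h0 by (simp add: algebra_simps diff_divide_distrib)
    finally have "norm (Phi n z) \<le> norm (R n) * norm ((mu - (exp (mu * hh n) - 1) / hh n) *\<^sub>R z + ((1 / hh n) *\<^sub>R (P n z - z) - C z))"
      by (simp add: norm_blinfun)
    also have "\<dots> \<le> M * (\<bar>mu - (exp (mu * hh n) - 1) / hh n\<bar> * norm z + norm ((1 / hh n) *\<^sub>R (P n z - z) - C z))"
      by (intro mult_mono Rnorm[OF n] order_trans[OF norm_triangle_ineq]) (use M1 in auto)
    finally show "norm (Phi n z) \<le> ?g n" .
  qed
  have d: "(\<lambda>n. (1 / hh n) *\<^sub>R (P n z - z)) \<longlonglongrightarrow> C z"
    using deriv[OF z] by (simp add: hh_def P_def)
  show "?g \<longlonglongrightarrow> 0"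
    by (rule tendsto_eq_intros equot d tendsto_const | simp)+
qed

end



context chern begin

lemma Phi_all: assumes z: "z \<in> DC" shows "(\<lambda>n. Phi n z) \<longlonglongrightarrow> 0"
proof (rule tendstoI)
  fix e :: real assume e: "e > 0"
  obtain zs where zs: "\<forall>j. zs j \<in> Dc" "zs \<longlonglongrightarrow> z" "(\<lambda>j. C (zs j)) \<longlonglongrightarrow> C z"
    using core[OF z] by blast
  have "(\<lambda>j. M * (mu * norm (z - zs j) + norm (C z - C (zs j))) + norm (z - zs j)) \<longlonglongrightarrow>
        M * (mu * norm (z - z) + norm (C z - C z)) + norm (z - z)"
    using zs by (intro tendsto_intros)
  then have "(\<lambda>j. M * (mu * norm (z - zs j) + norm (C z - C (zs j))) + norm (z - zs j)) \<longlonglongrightarrow> 0"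
    by simp
  from tendstoD[OF this, of "e/2"] e obtain j where
    j: "\<bar>M * (mu * norm (z - zs j) + norm (C z - C (zs j))) + norm (z - zs j)\<bar> < e/2"
    by (auto simp: eventually_sequentially dist_real_def)
  have "\<forall>\<^sub>F n in sequentially. norm (Phi n (zs j)) < e/2"
    using tendstoD[OF Phi_core[OF zs(1)[rule_format, of j]], of "e/2"] e by (simp add: dist_norm)
  moreover have "\<forall>\<^sub>F n in sequentially. n \<ge> 1" by (rule eventually_ge_at_top)
  ultimately show "\<forall>\<^sub>F n in sequentially. dist (Phi n z) 0 < e"
  proof eventually_elim
    case (elim n)
    have "norm (Phi n z - Phi n (zs j)) < e/2"
      using Phi_lip[OF elim(2), of z "zs j"] j abs_ge_self[of "M * (mu * norm (z - zs j) + norm (C z - C (zs j))) + norm (z - zs j)"]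
      by linarith
    then show ?case using elim(1) norm_triangle_ineq[of "Phi n z - Phi n (zs j)" "Phi n (zs j)"] by simp
  qed
qed

lemma Phi_unif: assumes w: "w \<in> DC" and e: "e > 0"
  shows "\<forall>\<^sub>F n in sequentially. \<forall>s\<in>{0..t}. norm (Phi n (U s w)) < e"
proof (rule unif_compact[where gA = "\<lambda>s. U s w" and gB = "\<lambda>s. U s (C w)" and L = "M * mu + M + 1"])
  show "compact {0..t}" by simp
  show "continuous_on {0..t} (\<lambda>s. U s w)" "continuous_on {0..t} (\<lambda>s. U s (C w))"
    by (auto intro: Ucont_on)
  show "0 \<le> M * mu + M + 1" using M1 mupos by simp
  show "e > 0" by fact
  fix n :: nat and s s' :: real assume n: "1 \<le> n" and s: "s \<in> {0..t}" and s': "s' \<in> {0..t}"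
  have Cs: "C (U s w) = U s (C w)" "C (U s' w) = U s' (C w)" using Dinv w s s' by auto
  have "norm (Phi n (U s w) - Phi n (U s' w)) \<le>
      M * (mu * norm (U s w - U s' w) + norm (U s (C w) - U s' (C w))) + norm (U s w - U s' w)"
    using Phi_lip[OF n] Cs by metis
  also have "\<dots> \<le> (M * mu + M + 1) * (norm (U s w - U s' w) + norm (U s (C w) - U s' (C w)))"
    using M1 mupos by (simp add: algebra_simps)
  finally show "norm (Phi n (U s w) - Phi n (U s' w)) \<le> (M * mu + M + 1) * (norm (U s w - U s' w) + norm (U s (C w) - U s' (C w)))" .
next
  fix s assume "s \<in> {0..t}"
  then show "(\<lambda>n. Phi n (U s w)) \<longlonglongrightarrow> 0" using Phi_all Dinv w by auto
qed

lemma eps_unif: assumes w: "w \<in> DC"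
  shows "\<exists>\<beta>. \<beta> \<longlonglongrightarrow> 0 \<and> (\<forall>n\<ge>1. \<forall>s\<in>{0..t}. norm (eps n (U s w)) \<le> \<beta> n)"
proof -
  obtain K where K: "\<forall>s\<in>{0..t}. norm (U s) \<le> K" using Ubound tpos by force
  define \<beta> where "\<beta> n = \<bar>(exp (mu * hh n) - 1) / hh n - mu\<bar> * (K * norm w) + K * norm ((1 / hh n) *\<^sub>R (U (hh n) w - w) - C w)" for n
  have "(\<lambda>n. (1 / hh n) *\<^sub>R (U (hh n) w - w)) \<longlonglongrightarrow> C w"
    using filterlim_compose[OF Glim[OF w] hh_at_right] by (simp add: o_def)
  then have "\<beta> \<longlonglongrightarrow> \<bar>mu - mu\<bar> * (K * norm w) + K * norm (C w - C w)"
    unfolding \<beta>_def by (intro tendsto_intros equot)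
  then have "\<beta> \<longlonglongrightarrow> 0" by simp
  moreover have "norm (eps n (U s w)) \<le> \<beta> n" if n: "n \<ge> 1" and s: "s \<in> {0..t}" for n s
  proof -
    have Cs: "C (U s w) = U s (C w)" using Dinv w s by auto
    have com: "U (hh n) (U s w) = U s (U (hh n) w)" using Ucomm hnn s by auto
    have "eps n (U s w) = ((exp (mu * hh n) - 1) / hh n - mu) *\<^sub>R U s w - U s ((1 / hh n) *\<^sub>R (U (hh n) w - w) - C w)"
      unfolding eps_def Cs com by (simp add: blinfun.bilinear_simps algebra_simps)
    also have "norm \<dots> \<le> \<bar>(exp (mu * hh n) - 1) / hh n - mu\<bar> * norm (U s w) + norm (U s ((1 / hh n) *\<^sub>R (U (hh n) w - w) - C w))"
      using norm_triangle_ineq4 by (metis norm_scaleR)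
    also have "\<dots> \<le> \<beta> n"
      unfolding \<beta>_def
    proof (intro add_mono mult_left_mono)
      show "norm (U s w) \<le> K * norm w"
        using K s norm_blinfun[of "U s" w] by (meson mult_right_mono norm_ge_zero order_trans)
      show "norm (U s ((1 / hh n) *\<^sub>R (U (hh n) w - w) - C w)) \<le> K * norm ((1 / hh n) *\<^sub>R (U (hh n) w - w) - C w)"
        using K s norm_blinfun by (meson mult_right_mono norm_ge_zero order_trans)
    qed simp
    finally show ?thesis .
  qed
  ultimately show ?thesis by blast
qed

lemma key_id: assumes n: "n \<ge> 1"
  shows "R n (P n y - U (hh n) y) = hh n *\<^sub>R (Phi n y + R n (eps n y))"
proof -
  define e where "e = exp (mu * hh n)"
  define h where "h = hh n"
  have h0: "h \<noteq> 0" using hpos[OF n] by (simp add: h_def)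
  have r: "R n (P n y) = e *\<^sub>R R n y - h *\<^sub>R y"
    using Rinv[OF n, of y] by (simp add: e_def h_def blinfun.bilinear_simps algebra_simps)
  have "hh n *\<^sub>R (Phi n y + R n (eps n y)) =
     h *\<^sub>R (mu *\<^sub>R R n y - R n (C y) - y + (((e - 1) / h) *\<^sub>R R n y - mu *\<^sub>R R n y - ((1 / h) *\<^sub>R (R n (U h y) - R n y) - R n (C y))))"
    by (simp add: Phi_def eps_def e_def h_def blinfun.bilinear_simps)
  also have "\<dots> = e *\<^sub>R R n y - h *\<^sub>R y - R n (U h y)"
    using h0 by (simp add: algebra_simps diff_divide_distrib)
  also have "\<dots> = R n (P n y - U (hh n) y)"
    by (simp add: r h_def blinfun.bilinear_simps)
  finally show ?thesis by simp
qed

end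



context chern begin

lemma telescope_id: assumes n: "n \<ge> 1"
  shows "R n (bl_pow (P n) n z - U t z) =
    (\<Sum>k<n. bl_pow (P n) (n - 1 - k) (R n (P n (U (real k * hh n) z) - U (hh n) (U (real k * hh n) z))))"
proof -
  define y where "y k = U (real k * hh n) z" for k
  define g where "g k = bl_pow (P n) (n - k) (R n (y k))" for k
  have step: "g k - g (Suc k) = bl_pow (P n) (n - 1 - k) (R n (P n (y k) - U (hh n) (y k)))" if k: "k < n" for k
  proof -
    have nk: "n - k = Suc (n - 1 - k)" "n - Suc k = n - 1 - k" using k by auto
    have ys: "y (Suc k) = U (hh n) (y k)"
      unfolding y_def using hnn by (simp add: Uadd_app[symmetric] algebra_simps)
    have "g k = bl_pow (P n) (n - 1 - k) (R n (P n (y k)))"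
      unfolding g_def nk by (simp add: bl_pow_comm_app[symmetric] Rcomm_app[OF n])
    moreover have "g (Suc k) = bl_pow (P n) (n - 1 - k) (R n (U (hh n) (y k)))"
      unfolding g_def nk ys ..
    ultimately show ?thesis by (simp add: blinfun.bilinear_simps)
  qed
  have "(\<Sum>k<n. g k - g (Suc k)) = g 0 - g n" by (rule sum_lessThan_telescope')
  moreover have "g 0 = R n (bl_pow (P n) n z)"
    unfolding g_def y_def by (simp add: U0 Rcomm_pow[OF n])
  moreover have "g n = R n (U t z)"
    unfolding g_def y_def using n by (simp add: hh_def)
  ultimately have "R n (bl_pow (P n) n z - U t z) = (\<Sum>k<n. g k - g (Suc k))"
    by (simp add: blinfun.bilinear_simps)
  also have "\<dots> = (\<Sum>k<n. bl_pow (P n) (n - 1 - k) (R n (P n (y k) - U (hh n) (y k))))"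
    by (rule sum.cong) (auto simp: step)
  finally show ?thesis unfolding y_def .
qed

lemma S4: assumes z: "z \<in> DC" shows "(\<lambda>n. R n (bl_pow (P n) n z - U t z)) \<longlonglongrightarrow> 0"
proof (rule tendstoI)
  fix e :: real assume e: "e > 0"
  define Q where "Q = t * (M * exp (W * t)) * (1 + M)"
  have Q: "Q > 0" using tpos M1 by (simp add: Q_def)
  define e' where "e' = e / (2 * Q)"
  have e': "e' > 0" using e Q by (simp add: e'_def)
  obtain \<beta> where \<beta>: "\<beta> \<longlonglongrightarrow> 0" "\<forall>n\<ge>1. \<forall>s\<in>{0..t}. norm (eps n (U s z)) \<le> \<beta> n"
    using eps_unif[OF z] by blast
  have "\<forall>\<^sub>F n in sequentially. \<forall>s\<in>{0..t}. norm (Phi n (U s z)) < e'" by (rule Phi_unif[OF z e'])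
  moreover have "\<forall>\<^sub>F n in sequentially. \<beta> n < e'"
    using tendstoD[OF \<beta>(1) e'] by eventually_elim (simp add: dist_real_def)
  moreover have "\<forall>\<^sub>F n in sequentially. n \<ge> 1" by (rule eventually_ge_at_top)
  ultimately show "\<forall>\<^sub>F n in sequentially. dist (R n (bl_pow (P n) n z - U t z)) 0 < e"
  proof eventually_elim
    case (elim n)
    have n: "n \<ge> 1" using elim by simp
    have tb: "norm (bl_pow (P n) (n - 1 - k) (R n (P n (U (real k * hh n) z) - U (hh n) (U (real k * hh n) z))))
        \<le> M * exp (W * t) * (hh n * (e' + M * e'))" if k: "k < n" for k
    proof -
      let ?s = "real k * hh n"
      have s: "?s \<in> {0..t}"
      proof -
        have "real k * hh n \<le> real n * hh n" using k hnn by (intro mult_right_mono) auto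
        also have "\<dots> = t" using n by (simp add: hh_def)
        finally show ?thesis using hnn by simp
      qed
      have "norm (bl_pow (P n) (n - 1 - k) (R n (P n (U ?s z) - U (hh n) (U ?s z))))
          \<le> norm (bl_pow (P n) (n - 1 - k)) * norm (R n (P n (U ?s z) - U (hh n) (U ?s z)))"
        by (rule norm_blinfun)
      also have "\<dots> \<le> M * exp (W * t) * (hh n * (e' + M * e'))"
      proof (rule mult_mono)
        show "norm (bl_pow (P n) (n - 1 - k)) \<le> M * exp (W * t)" by (rule Pbt[OF n]) auto
        have "norm (R n (P n (U ?s z) - U (hh n) (U ?s z))) = hh n * norm (Phi n (U ?s z) + R n (eps n (U ?s z)))"
          using key_id[OF n] hnn by simp
        also have "\<dots> \<le> hh n * (e' + M * e')"
        proof (intro mult_left_mono hnn order_trans[OF norm_triangle_ineq] add_mono)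
          show "norm (Phi n (U ?s z)) \<le> e'" using elim s by (auto intro: less_imp_le)
          have "norm (R n (eps n (U ?s z))) \<le> norm (R n) * norm (eps n (U ?s z))" by (rule norm_blinfun)
          also have "\<dots> \<le> M * e'"
          proof (rule mult_mono)
            have "norm (eps n (U ?s z)) \<le> \<beta> n" using \<beta>(2) n s by blast
            then show "norm (eps n (U ?s z)) \<le> e'" using elim by linarith
          qed (use Rnorm[OF n] M1 in auto)
          finally show "norm (R n (eps n (U ?s z))) \<le> M * e'" .
        qed
        finally show "norm (R n (P n (U ?s z) - U (hh n) (U ?s z))) \<le> hh n * (e' + M * e')" .
      qed (use M1 in auto)
      finally show ?thesis .
    qed
    have "norm (R n (bl_pow (P n) n z - U t z)) \<le> (\<Sum>k<n. M * exp (W * t) * (hh n * (e' + M * e')))"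
      unfolding telescope_id[OF n] by (intro order_trans[OF norm_sum] sum_mono tb) auto
    also have "\<dots> = real n * hh n * (M * exp (W * t)) * (1 + M) * e'" by (simp add: algebra_simps)
    also have "\<dots> = Q * e'" using n by (simp add: hh_def Q_def)
    also have "\<dots> < e" using Q e by (simp add: e'_def)
    finally show ?case by simp
  qed
qed

lemma S5: "(\<lambda>n. R n (bl_pow (P n) n x - U t x)) \<longlonglongrightarrow> 0"
proof -
  have "(\<lambda>n. (R n o\<^sub>L (bl_pow (P n) n - U t)) x) \<longlonglongrightarrow> 0"
  proof (rule ext_dense[OF _ _ Ddense])
    fix n :: nat assume n: "n \<ge> 1"
    have "norm (R n o\<^sub>L (bl_pow (P n) n - U t)) \<le> norm (R n) * norm (bl_pow (P n) n - U t)"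
      by (rule norm_blinfun_compose)
    also have "\<dots> \<le> M * (M * exp (W * t) + norm (U t))"
      using Rnorm[OF n] Pbt[OF n order_refl] M1
      by (intro mult_mono order_trans[OF norm_triangle_ineq4] add_mono) auto
    finally show "norm (R n o\<^sub>L (bl_pow (P n) n - U t)) \<le> M * (M * exp (W * t) + norm (U t))" .
  next
    fix z assume "z \<in> DC"
    then show "(\<lambda>n. (R n o\<^sub>L (bl_pow (P n) n - U t)) z) \<longlonglongrightarrow> 0"
      using S4 by (simp add: blinfun.bilinear_simps)
  qed
  then show ?thesis by (simp add: blinfun.bilinear_simps)
qed

lemma S6: assumes w: "w \<in> DC" shows "(\<lambda>n. bl_pow (P n) n w - U t w) \<longlonglongrightarrow> 0"
proof -
  define z where "z = mu *\<^sub>R w - C w"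
  have Ct: "C (U t w) = U t (C w)" using Dinv w tpos by auto
  have idn: "bl_pow (P n) n w - U t w = R n (bl_pow (P n) n z - U t z) - bl_pow (P n) n (Phi n w) + Phi n (U t w)"
    if n: "n \<ge> 1" for n
  proof -
    have "R n (bl_pow (P n) n z) = bl_pow (P n) n (Phi n w + w)"
      unfolding z_def Phi_def by (simp add: Rcomm_pow[OF n])
    moreover have "R n (U t z) = Phi n (U t w) + U t w"
      unfolding z_def Phi_def Ct by (simp add: blinfun.bilinear_simps)
    ultimately show ?thesis by (simp add: blinfun.bilinear_simps)
  qed
  have a: "(\<lambda>n. bl_pow (P n) n (Phi n w)) \<longlonglongrightarrow> 0"
  proof (rule Lim_null_comparison)
    show "\<forall>\<^sub>F n in sequentially. norm (bl_pow (P n) n (Phi n w)) \<le> M * exp (W * t) * norm (Phi n w)"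
      using eventually_ge_at_top[of 1]
    proof eventually_elim
      case (elim n)
      show ?case using Pbt[OF elim order_refl] norm_blinfun[of "bl_pow (P n) n" "Phi n w"]
        by (meson mult_right_mono norm_ge_zero order_trans)
    qed
    show "(\<lambda>n. M * exp (W * t) * norm (Phi n w)) \<longlonglongrightarrow> 0"
      using Phi_all[OF w] by (intro tendsto_mult_right_zero) (simp add: tendsto_norm_zero_iff)
  qed
  have b: "(\<lambda>n. Phi n (U t w)) \<longlonglongrightarrow> 0" using Phi_all Dinv w tpos by auto
  have "(\<lambda>n. R n (bl_pow (P n) n z - U t z) - bl_pow (P n) n (Phi n w) + Phi n (U t w)) \<longlonglongrightarrow> 0 - 0 + 0"
    by (intro tendsto_intros S5 a b)
  then have "(\<lambda>n. R n (bl_pow (P n) n z - U t z) - bl_pow (P n) n (Phi n w) + Phi n (U t w)) \<longlonglongrightarrow> 0" by simp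
  then show ?thesis
  proof (rule Lim_transform_eventually)
    show "\<forall>\<^sub>F n in sequentially. R n (bl_pow (P n) n z - U t z) - bl_pow (P n) n (Phi n w) + Phi n (U t w) = bl_pow (P n) n w - U t w"
      using eventually_ge_at_top[of 1] by eventually_elim (simp add: idn)
  qed
qed

lemma S7: "(\<lambda>n. bl_pow (P n) n x - U t x) \<longlonglongrightarrow> 0"
proof -
  have "(\<lambda>n. (bl_pow (P n) n - U t) x) \<longlonglongrightarrow> 0"
  proof (rule ext_dense[OF _ _ Ddense])
    fix n :: nat assume n: "n \<ge> 1"
    show "norm (bl_pow (P n) n - U t) \<le> M * exp (W * t) + norm (U t)"
      using Pbt[OF n order_refl] by (intro order_trans[OF norm_triangle_ineq4] add_mono) auto
  next
    fix z assume "z \<in> DC"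
    then show "(\<lambda>n. (bl_pow (P n) n - U t) z) \<longlonglongrightarrow> 0"
      using S6 by (simp add: blinfun.bilinear_simps)
  qed
  then show ?thesis by (simp add: blinfun.bilinear_simps)
qed

end



lemma semi_apply_tendsto:
  assumes g: "gen DB B S" and q: "(q \<longlongrightarrow> a) (at_right 0)"
  shows "((\<lambda>h. S h (q h)) \<longlongrightarrow> a) (at_right 0)"
proof -
  interpret gen DB B S by (rule g)
  obtain K where K: "\<forall>s\<in>{0..1}. norm (S s) \<le> K" using Ubound[of 1] by auto
  have 1: "((\<lambda>h. S h (q h - a)) \<longlongrightarrow> 0) (at_right 0)"
  proof (rule Lim_null_comparison)
    show "\<forall>\<^sub>F h in at_right 0. norm (S h (q h - a)) \<le> K * norm (q h - a)"
      unfolding eventually_at_right_field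
    proof (intro exI[of _ 1] conjI allI impI)
      fix h :: real assume "0 < h" "h < 1"
      then show "norm (S h (q h - a)) \<le> K * norm (q h - a)"
        using K norm_blinfun[of "S h" "q h - a"] by (meson atLeastAtMost_iff less_imp_le mult_right_mono norm_ge_zero order_trans)
    qed simp
    have "((\<lambda>h. q h - a) \<longlongrightarrow> 0) (at_right 0)" using q by (rule LIM_zero)
    then show "((\<lambda>h. K * norm (q h - a)) \<longlongrightarrow> 0) (at_right 0)"
      by (intro tendsto_mult_right_zero) (simp add: tendsto_norm_zero_iff)
  qed
  have "((\<lambda>h. S h (q h - a) + S h a) \<longlongrightarrow> 0 + a) (at_right 0)"
    by (intro tendsto_intros 1 Ustrong0)
  then show ?thesis by (simp add: blinfun.bilinear_simps)
qed

lemma prod_deriv: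
  assumes gA: "gen DA A T" and gB: "gen DB B S" and zA: "z \<in> DA" and zB: "z \<in> DB"
  shows "((\<lambda>h. (1/h) *\<^sub>R (S h (T h z) - z)) \<longlongrightarrow> A z + B z) (at_right 0)"
proof -
  have "((\<lambda>h. S h ((1/h) *\<^sub>R (T h z - z)) + (1/h) *\<^sub>R (S h z - z)) \<longlongrightarrow> A z + B z) (at_right 0)"
    by (intro tendsto_intros semi_apply_tendsto[OF gB] gen.Glim[OF gA zA] gen.Glim[OF gB zB])
  then show ?thesis by (simp add: blinfun.bilinear_simps algebra_simps)
qed

lemma tn_at_right: "t > 0 \<Longrightarrow> filterlim (\<lambda>n::nat. t / real n) (at_right 0) sequentially"
  by (rule filterlim_at_withinI[OF lim_const_over_n])
     (auto simp: eventually_sequentially intro!: exI[of _ 1])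

theorem mainTheorem1:
  fixes DA DB DC :: "'a::banach set"
    and A B C :: "'a \<Rightarrow> 'a"
    and T S U :: "real \<Rightarrow> ('a \<Rightarrow>\<^sub>L 'a)"
    and \<Theta> M4 \<omega>4 t :: real
  assumes A_cl: "closed_operator DA A" and A_dense: "densely_defined DA"
    and B_cl: "closed_operator DB B" and B_dense: "densely_defined DB"
    and A_gen: "generates DA A T"
    and B_gen: "generates DB B S"
    and C_closure: "op_graph DC C = closure (op_graph (DA \<inter> DB) (\<lambda>x. A x + B x))"
    and dom_incl: "DA \<inter> DB \<subseteq> DC"
    and C_gen: "generates DC C U"
    and Theta: "0 < \<Theta>" "\<Theta> < 1"
    and M4: "M4 \<ge> 1"
    and stab1: "\<And>s (n::nat). s \<ge> 0 \<Longrightarrow> n \<ge> 1 \<Longrightarrow>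
       norm (bl_pow (\<Theta> *\<^sub>R (S (s / real n) o\<^sub>L T (s / real n)) + (1 - \<Theta>) *\<^sub>R (T (s / real n) o\<^sub>L S (s / real n))) n)
         \<le> M4 * exp (\<omega>4 * s)"
    and stab2: "\<And>s (n::nat). s \<ge> 0 \<Longrightarrow> n \<ge> 1 \<Longrightarrow>
       norm (bl_pow (\<Theta> *\<^sub>R (T (s / real n) o\<^sub>L S (s / real n)) + (1 - \<Theta>) *\<^sub>R (S (s / real n) o\<^sub>L T (s / real n))) n)
         \<le> M4 * exp (\<omega>4 * s)"
    and t_pos: "t > 0"
  shows "\<forall>x. (\<lambda>n::nat. norm (bl_pow (\<Theta> *\<^sub>R (S (t / real n) o\<^sub>L T (t / real n))
              + (1 - \<Theta>) *\<^sub>R (T (t / real n) o\<^sub>L S (t / real n))) n x - U t x)) \<longlonglongrightarrow> 0"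
proof
  fix x
  define F where "F h = \<Theta> *\<^sub>R (S h o\<^sub>L T h) + (1 - \<Theta>) *\<^sub>R (T h o\<^sub>L S h)" for h
  have gA: "gen DA A T" using A_gen by unfold_locales
  have gB: "gen DB B S" using B_gen by unfold_locales
  have gC: "gen DC C U" using C_gen by unfold_locales
  have Cgraph: "C y = A y + B y" if "y \<in> DA \<inter> DB" for y
  proof -
    have "(y, A y + B y) \<in> op_graph (DA \<inter> DB) (\<lambda>x. A x + B x)" using that by (auto simp: op_graph_def)
    then have "(y, A y + B y) \<in> op_graph DC C" using C_closure closure_subset by blast
    then show ?thesis by (auto simp: op_graph_def)
  qed
  have ch: "chern DC C U F M4 (max \<omega>4 0) t (DA \<inter> DB)"
  proof (intro chern.intro gC chern_axioms.intro)
    show "M4 \<ge> 1" by fact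
    show "max \<omega>4 0 \<ge> 0" by simp
    show "t > 0" by fact
    fix h :: real and k :: nat assume h: "h \<ge> 0"
    show "norm (bl_pow (F h) k) \<le> M4 * exp (max \<omega>4 0 * real k * h)"
    proof (cases "k = 0")
      case True
      then show ?thesis using M4 norm_id_blinfun_le by (auto intro: order_trans)
    next
      case False
      then have k: "k \<ge> 1" by simp
      have "norm (bl_pow (F h) k) \<le> M4 * exp (\<omega>4 * (real k * h))"
        using stab1[of "real k * h" k] k h by (simp add: F_def)
      also have "\<dots> \<le> M4 * exp (max \<omega>4 0 * real k * h)"
        using M4 h by (intro mult_left_mono) (auto intro!: mult_right_mono simp: mult.assoc)
      finally show ?thesis .
    qed
  next
    fix z assume z: "z \<in> DC"
    then have "(z, C z) \<in> closure (op_graph (DA \<inter> DB) (\<lambda>x. A x + B x))"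
      using C_closure by (auto simp: op_graph_def)
    then obtain p where p: "\<forall>j. p j \<in> op_graph (DA \<inter> DB) (\<lambda>x. A x + B x)" "p \<longlonglongrightarrow> (z, C z)"
      unfolding closure_sequential by blast
    have pj: "fst (p j) \<in> DA \<inter> DB" "snd (p j) = C (fst (p j))" for j
      using p(1)[rule_format, of j] Cgraph by (auto simp: op_graph_def)
    show "\<exists>zs. (\<forall>j. zs j \<in> DA \<inter> DB) \<and> zs \<longlonglongrightarrow> z \<and> (\<lambda>j. C (zs j)) \<longlonglongrightarrow> C z"
    proof (intro exI[of _ "\<lambda>j. fst (p j)"] conjI)
      show "\<forall>j. fst (p j) \<in> DA \<inter> DB" using pj by auto
      show "(\<lambda>j. fst (p j)) \<longlonglongrightarrow> z" using tendsto_fst[OF p(2)] by simp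
      show "(\<lambda>j. C (fst (p j))) \<longlonglongrightarrow> C z" using tendsto_snd[OF p(2)] pj(2) by simp
    qed
  next
    fix z assume z: "z \<in> DA \<inter> DB"
    have "((\<lambda>h. \<Theta> *\<^sub>R ((1/h) *\<^sub>R (S h (T h z) - z)) + (1 - \<Theta>) *\<^sub>R ((1/h) *\<^sub>R (T h (S h z) - z)))
       \<longlongrightarrow> \<Theta> *\<^sub>R (A z + B z) + (1 - \<Theta>) *\<^sub>R (B z + A z)) (at_right 0)"
      using z by (intro tendsto_intros prod_deriv[OF gA gB] prod_deriv[OF gB gA]) auto
    moreover have "\<Theta> *\<^sub>R (A z + B z) + (1 - \<Theta>) *\<^sub>R (B z + A z) = C z"
      using Cgraph[OF z] by (simp add: algebra_simps)
    moreover have "(\<lambda>h. (1/h) *\<^sub>R (F h z - z)) =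
      (\<lambda>h. \<Theta> *\<^sub>R ((1/h) *\<^sub>R (S h (T h z) - z)) + (1 - \<Theta>) *\<^sub>R ((1/h) *\<^sub>R (T h (S h z) - z)))"
    proof
      fix h :: real
      have e1: "F h z - z = \<Theta> *\<^sub>R (S h (T h z) - z) + (1 - \<Theta>) *\<^sub>R (T h (S h z) - z)"
        by (simp add: F_def blinfun.bilinear_simps algebra_simps)
      show "(1/h) *\<^sub>R (F h z - z) = \<Theta> *\<^sub>R ((1/h) *\<^sub>R (S h (T h z) - z)) + (1 - \<Theta>) *\<^sub>R ((1/h) *\<^sub>R (T h (S h z) - z))"
        unfolding e1 by (simp only: scaleR_add_right scaleR_scaleR mult.commute)
    qed
    ultimately have "((\<lambda>h. (1/h) *\<^sub>R (F h z - z)) \<longlongrightarrow> C z) (at_right 0)"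
      by simp
    from filterlim_compose[OF this tn_at_right[OF t_pos]]
    show "(\<lambda>n. (1 / (t / real n)) *\<^sub>R (F (t / real n) z - z)) \<longlonglongrightarrow> C z" by (simp add: o_def)
  qed
  interpret c: chern DC C U F M4 "max \<omega>4 0" t "DA \<inter> DB" by (rule ch)
  have "(\<lambda>n. bl_pow (F (t / real n)) n x - U t x) \<longlonglongrightarrow> 0"
    using c.S7[of x] by (simp add: c.P_def c.hh_def)
  then show "(\<lambda>n::nat. norm (bl_pow (\<Theta> *\<^sub>R (S (t / real n) o\<^sub>L T (t / real n))
              + (1 - \<Theta>) *\<^sub>R (T (t / real n) o\<^sub>L S (t / real n))) n x - U t x)) \<longlonglongrightarrow> 0"
    by (simp add: F_def tendsto_norm_zero_iff)
qed


end
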